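(* Let $r\ge4$, $l\ge r$, $\alpha,\beta\in\mathbb N$ with $\alpha+\beta=l-(r-2)$, let $N_G=\mathbb Z^r+\mathbb Z\frac1l(1,\ldots,1,\alpha,\beta)^{\intercal}$ (with $r-2$ entries equal to $1$), $\mathfrak L=\{x\in\mathbb R^r:x_1=\cdots=x_{r-2}\}$, $\overline{N_G}=N_G\cap\mathfrak L$ and $\overline{\sigma_0}=\mathrm{pos}(e_1,\ldots,e_r)\cap\mathfrak L$. Then the first primitive lattice point $\mathfrak n_G$ of $\overline{N_G}\setminus\{\mathbf 0\}$ on the ray $\mathbb R_{\ge0}\frac1{r-2}\sum_{i=1}^{r-2}e_i$ is $$\mathfrak n_G=\frac{1}{\gcd(\alpha,\beta,l)}\sum_{i=1}^{r-2}e_i,$$ so that the set of primitive minimal generators of $\overline{\sigma_0}$ is $\{\mathfrak n_G,e_{r-1},e_r\}$, and $$\mu_G:=\min\Big\{\varkappa\in\mathbb Q_{>0}:\varkappa\cdot\frac1{r-2}\sum_{i=1}^{r-2}e_i\in\overline{N_G}\setminus\{\mathbf0\}\Big\}=\frac{r-2}{\gcd(\alpha,\beta,l)}.$$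
   Context: $e_1,\ldots,e_r$ are the standard unit vectors of $\mathbb R^r$. *)

theory Defs
  imports Main Complex_Main
begin

text \<open>Vectors of R^r are modelled as functions nat => real, coordinates indexed by 1..r,
  and zero outside {1..r}.\<close>

definition evec :: "nat \<Rightarrow> nat \<Rightarrow> real" where
  "evec i = (\<lambda>j. if j = i then 1 else 0)"

definition genv :: "nat \<Rightarrow> nat \<Rightarrow> nat \<Rightarrow> nat \<Rightarrow> nat \<Rightarrow> real" where
  "genv r l a b = (\<lambda>j. (if 1 \<le> j \<and> j \<le> r - 2 then 1
                         else if j = r - 1 then real a
                         else if j = r then real b else 0) / real l)"

definition NG :: "nat \<Rightarrow> nat \<Rightarrow> nat \<Rightarrow> nat \<Rightarrow> (nat \<Rightarrow> real) set" where
  "NG r l a b = {x. \<exists>(z::nat \<Rightarrow> int) (k::int).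
      x = (\<lambda>j. (if j \<in> {1..r} then of_int (z j) else 0) + of_int k * genv r l a b j)}"

definition Lsp :: "nat \<Rightarrow> (nat \<Rightarrow> real) set" where
  "Lsp r = {x. (\<forall>j. j \<notin> {1..r} \<longrightarrow> x j = 0) \<and>
               (\<forall>i\<in>{1..r-2}. \<forall>j\<in>{1..r-2}. x i = x j)}"

definition NGbar :: "nat \<Rightarrow> nat \<Rightarrow> nat \<Rightarrow> nat \<Rightarrow> (nat \<Rightarrow> real) set" where
  "NGbar r l a b = NG r l a b \<inter> Lsp r"

definition pos_cone :: "(nat \<Rightarrow> real) set \<Rightarrow> (nat \<Rightarrow> real) set" where
  "pos_cone G = {x. \<exists>S c. finite S \<and> S \<subseteq> G \<and> (\<forall>v\<in>S. c v \<ge> (0::real)) \<and>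
                       x = (\<lambda>j. \<Sum>v\<in>S. c v * v j)}"

definition sigma0bar :: "nat \<Rightarrow> (nat \<Rightarrow> real) set" where
  "sigma0bar r = pos_cone (evec ` {1..r}) \<inter> Lsp r"

definition ray :: "(nat \<Rightarrow> real) \<Rightarrow> (nat \<Rightarrow> real) set" where
  "ray v = {(\<lambda>j. t * v j) | t. t \<ge> 0}"

definition extremal_ray_gen :: "(nat \<Rightarrow> real) set \<Rightarrow> (nat \<Rightarrow> real) \<Rightarrow> bool" where
  "extremal_ray_gen \<sigma> v \<longleftrightarrow> v \<in> \<sigma> \<and> v \<noteq> (\<lambda>_. 0) \<and>
     (\<forall>a\<in>\<sigma>. \<forall>b\<in>\<sigma>. (\<lambda>j. a j + b j) \<in> ray v \<longrightarrow> a \<in> ray v \<and> b \<in> ray v)"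

definition first_lattice_point :: "(nat \<Rightarrow> real) set \<Rightarrow> (nat \<Rightarrow> real) \<Rightarrow> (nat \<Rightarrow> real) \<Rightarrow> bool" where
  "first_lattice_point N v p \<longleftrightarrow>
     (\<exists>t>0. p = (\<lambda>j. t * v j) \<and> p \<in> N - {\<lambda>_. 0} \<and>
        (\<forall>s>0. (\<lambda>j. s * v j) \<in> N - {\<lambda>_. 0} \<longrightarrow> t \<le> s))"

definition primitive_generators :: "(nat \<Rightarrow> real) set \<Rightarrow> (nat \<Rightarrow> real) set \<Rightarrow> (nat \<Rightarrow> real) set" where
  "primitive_generators N \<sigma> = {p. \<exists>v. extremal_ray_gen \<sigma> v \<and> first_lattice_point N v p}"

end

theory Submission imports Defs begin

definition uvec :: "nat \<Rightarrow> nat \<Rightarrow> real" where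
  "uvec m = (\<lambda>j. if 1 \<le> j \<and> j \<le> m then 1 else 0)"

lemma sum_evec: "(\<Sum>i = 1..m. evec i j) = uvec m j"
  by (simp add: evec_def uvec_def)

lemma NG_u:
  assumes r: "r \<ge> 4" and l: "l \<ge> r"
  shows "(\<lambda>j. s * uvec (r-2) j) \<in> NG r l a b \<longleftrightarrow> (\<exists>n::int. s = of_int n / real (gcd a (gcd b l)))"
proof
  let ?g = "gcd a (gcd b l)"
  have lpos: "real l > 0" using r l by simp
  have gpos: "?g > 0" using r l by simp
  have rf: "Suc 0 \<le> r - 2" "\<not> r - 1 \<le> r - 2" "\<not> r \<le> r - 2" "r - 1 \<noteq> r" "r - 1 \<ge> 1" using r by auto
  assume "(\<lambda>j. s * uvec (r-2) j) \<in> NG r l a b"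
  then obtain z k where h: "(\<lambda>j. s * uvec (r-2) j) = (\<lambda>j. (if j\<in>{1..r} then of_int (z j) else 0) + of_int k * genv r l a b j)"
    unfolding NG_def by blast
  have h1: "s = of_int (z 1) + of_int k / real l"
    using fun_cong[OF h, of 1] r rf by (simp add: uvec_def genv_def)
  have h2: "0 = of_int (z (r-1)) + of_int k * real a / real l"
    using fun_cong[OF h, of "r-1"] r rf by (simp add: uvec_def genv_def)
  have h3: "0 = of_int (z r) + of_int k * real b / real l"
    using fun_cong[OF h, of "r"] r rf by (simp add: uvec_def genv_def)
  have "real_of_int (k * int a) = real_of_int (- z (r-1) * int l)"
    using h2 lpos by (simp add: field_simps)
  hence da: "int l dvd k * int a" by (metis dvd_triv_right mult.commute of_int_eq_iff)
  have "real_of_int (k * int b) = real_of_int (- z r * int l)"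
    using h3 lpos by (simp add: field_simps)
  hence db: "int l dvd k * int b" by (metis dvd_triv_right mult.commute of_int_eq_iff)
  have "int l dvd gcd (k * int a) (gcd (k * int b) (k * int l))"
    using da db by simp
  also have "gcd (k * int b) (k * int l) = \<bar>k * int (gcd b l)\<bar>"
    by (simp add: gcd_mult_distrib_int[symmetric] abs_mult)
  also have "gcd (k*int a) \<bar>k * int (gcd b l)\<bar> = gcd (k*int a) (k * int (gcd b l))" by simp
  also have "\<dots> = \<bar>k\<bar> * int ?g"
    by (simp only: gcd_mult_distrib_int[symmetric] gcd_int_int_eq)
  finally have "int l dvd \<bar>k * int ?g\<bar>" by (simp add: abs_mult)
  hence "int l dvd k * int ?g" by (simp only: dvd_abs_iff)
  then obtain q where q: "k * int ?g = int l * q" by blast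
  have "real_of_int k / real l = real_of_int q / real ?g"
    using q lpos gpos by (simp add: field_simps) (metis of_int_mult of_int_of_nat_eq mult.commute)
  hence "s = of_int (z 1 * int ?g + q) / real ?g" using h1 gpos by (simp add: field_simps)
  thus "\<exists>n::int. s = of_int n / real ?g" by blast
next
  let ?g = "gcd a (gcd b l)"
  have lpos: "real l > 0" using r l by simp
  have gpos: "?g > 0" using r l by simp
  assume "\<exists>n::int. s = of_int n / real ?g"
  then obtain n where n: "s = of_int n / real ?g" by blast
  have "?g dvd l" by (meson gcd_dvd2 dvd_trans)
  then obtain L' where L': "l = ?g * L'" by (rule dvdE)
  have "?g dvd a" by simp
  then obtain A' where A': "a = ?g * A'" by (rule dvdE)
  have "?g dvd b" by (meson gcd_dvd1 gcd_dvd2 dvd_trans)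
  then obtain B' where B': "b = ?g * B'" by (rule dvdE)
  define z where "z = (\<lambda>j. if j = r-1 then - n * int A' else if j = r then - n * int B' else (0::int))"
  define k where "k = n * int L'"
  have "(\<lambda>j. s * uvec (r-2) j) = (\<lambda>j. (if j\<in>{1..r} then of_int (z j) else 0) + of_int k * genv r l a b j)"
  proof
    fix j
    have gne: "real ?g \<noteq> 0" using gpos by simp
    have Lne: "real L' \<noteq> 0" using lpos L' by (metis mult_0_right of_nat_0 less_irrefl of_nat_eq_0_iff)
    have lL: "real l = real ?g * real L'" using L' by (metis of_nat_mult)
    have aA: "real a = real ?g * real A'" using A' by (metis of_nat_mult)
    have bB: "real b = real ?g * real B'" using B' by (metis of_nat_mult)
    consider "1 \<le> j \<and> j \<le> r - 2" | "j = r - 1" | "j = r" | "j = 0 \<or> j > r" using r by linarith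
    thus "s * uvec (r-2) j = (if j\<in>{1..r} then of_int (z j) else 0) + of_int k * genv r l a b j"
    proof cases
      case 1
      hence "j \<noteq> r - 1" "j \<noteq> r" "j \<in> {1..r}" by auto
      with 1 show ?thesis unfolding n z_def k_def uvec_def genv_def lL using gne Lne lpos by simp
    next
      case 2
      hence "\<not> j \<le> r - 2" "j \<noteq> r" "j \<in> {1..r}" using r by auto
      with 2 show ?thesis unfolding n z_def k_def uvec_def genv_def lL aA using gne Lne lpos by simp
    next
      case 3
      hence "\<not> j \<le> r - 2" "j \<noteq> r - 1" "j \<in> {1..r}" using r by auto
      with 3 show ?thesis unfolding n z_def k_def uvec_def genv_def lL bB using gne Lne lpos by simp
    next
      case 4
      hence "\<not> (1 \<le> j \<and> j \<le> r - 2)" "j \<noteq> r - 1" "j \<noteq> r" "j \<notin> {1..r}" using r by auto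
      hence "uvec (r-2) j = 0" "genv r l a b j = 0" unfolding uvec_def genv_def by auto
      with 4 show ?thesis using r by auto
    qed
  qed
  thus "(\<lambda>j. s * uvec (r-2) j) \<in> NG r l a b" unfolding NG_def by blast
qed


lemma NG_e:
  assumes r: "r \<ge> 4" and l: "l \<ge> r" and p: "p = r - 1 \<or> p = r"
  shows "(\<lambda>j. s * evec p j) \<in> NG r l a b \<longleftrightarrow> (\<exists>n::int. s = of_int n)"
proof
  have lpos: "real l > 0" using r l by simp
  have rf: "Suc 0 \<le> r - 2" "\<not> r - 1 \<le> r - 2" "\<not> r \<le> r - 2" "r - 1 \<noteq> r" "r - 1 \<ge> 1" using r by auto
  assume "(\<lambda>j. s * evec p j) \<in> NG r l a b"
  then obtain z k where h: "(\<lambda>j. s * evec p j) = (\<lambda>j. (if j\<in>{1..r} then of_int (z j) else 0) + of_int k * genv r l a b j)"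
    unfolding NG_def by blast
  have p1: "p \<noteq> 1" "p \<ge> 1" "p \<le> r" using p r by auto
  have h1: "of_int k / real l = - of_int (z 1)"
    using fun_cong[OF h, of 1] r rf p1 by (simp add: evec_def genv_def)
  show "\<exists>n::int. s = of_int n"
    using p
  proof
    assume pp: "p = r - 1"
    have "s = of_int (z p) + of_int k * real a / real l"
      using fun_cong[OF h, of p] pp r rf p1 by (simp add: evec_def genv_def)
    also have "\<dots> = of_int (z p) + (of_int k / real l) * real a" by simp
    also have "\<dots> = of_int (z p - z 1 * int a)" unfolding h1 by simp
    finally show ?thesis by blast
  next
    assume pp: "p = r"
    have "s = of_int (z p) + of_int k * real b / real l"
      using fun_cong[OF h, of p] pp r rf p1 by (simp add: evec_def genv_def)
    also have "\<dots> = of_int (z p) + (of_int k / real l) * real b" by simp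
    also have "\<dots> = of_int (z p - z 1 * int b)" unfolding h1 by simp
    finally show ?thesis by blast
  qed
next
  have p1: "p \<ge> 1" "p \<le> r" using p r by auto
  assume "\<exists>n::int. s = of_int n"
  then obtain n where n: "s = of_int n" by blast
  define z where "z = (\<lambda>j. if j = p then n else (0::int))"
  have "(\<lambda>j. s * evec p j) = (\<lambda>j. (if j\<in>{1..r} then of_int (z j) else 0) + of_int (0::int) * genv r l a b j)"
    using p1 by (auto simp: evec_def n z_def)
  thus "(\<lambda>j. s * evec p j) \<in> NG r l a b" unfolding NG_def by blast
qed

lemma Lsp_u: "(\<lambda>j. s * uvec (r-2) j) \<in> Lsp r"
  unfolding Lsp_def uvec_def by auto

lemma Lsp_e: assumes "r \<ge> 4" "p = r - 1 \<or> p = r" shows "(\<lambda>j. s * evec p j) \<in> Lsp r"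
  using assms unfolding Lsp_def evec_def by auto

lemma sigma_char: "sigma0bar r = {x. x \<in> Lsp r \<and> (\<forall>j. x j \<ge> 0)}"
proof (intro set_eqI iffI)
  fix x assume "x \<in> sigma0bar r"
  then obtain S c where S: "finite S" "S \<subseteq> evec ` {1..r}" "\<forall>v\<in>S. c v \<ge> (0::real)"
     "x = (\<lambda>j. \<Sum>v\<in>S. c v * v j)" and L: "x \<in> Lsp r"
    unfolding sigma0bar_def pos_cone_def by blast
  have "\<forall>j. x j \<ge> 0"
  proof
    fix j
    have "\<forall>v\<in>S. v j \<ge> 0" using S(2) by (auto simp: evec_def)
    thus "x j \<ge> 0" using S(3,4) by (auto intro: sum_nonneg)
  qed
  with L show "x \<in> {x. x \<in> Lsp r \<and> (\<forall>j. x j \<ge> 0)}" by blast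
next
  fix x assume "x \<in> {x. x \<in> Lsp r \<and> (\<forall>j. x j \<ge> 0)}"
  hence L: "x \<in> Lsp r" and nn: "\<forall>j. x j \<ge> 0" by auto
  define c where "c = (\<lambda>v::nat\<Rightarrow>real. \<Sum>i\<in>{1..r}. v i * x i)"
  have inj: "inj_on evec {1..r}"
  proof (rule inj_onI)
    fix i k assume "evec i = evec k"
    hence "evec i i = evec k i" by simp
    thus "i = k" by (auto simp: evec_def split: if_splits)
  qed
  have ce: "c (evec i) = x i" if "i \<in> {1..r}" for i
  proof -
    have "(\<lambda>ia. evec i ia * x ia) = (\<lambda>ia. if ia = i then x i else 0)" by (auto simp: evec_def)
    hence "c (evec i) = (\<Sum>ia\<in>{1..r}. if ia = i then x i else 0)" unfolding c_def by (simp only:)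
    thus ?thesis using that by simp
  qed
  have "x = (\<lambda>j. \<Sum>v\<in>evec ` {1..r}. c v * v j)"
  proof
    fix j
    have "(\<Sum>v\<in>evec ` {1..r}. c v * v j) = (\<Sum>i\<in>{1..r}. c (evec i) * evec i j)"
      using sum.reindex[OF inj, of "\<lambda>v. c v * v j"] by (simp add: comp_def)
    also have "\<dots> = (\<Sum>i\<in>{1..r}. x i * evec i j)"
      by (rule sum.cong) (auto simp: ce)
    also have "\<dots> = x j"
      using L unfolding evec_def Lsp_def by (auto simp: if_distrib cong: if_cong)
    finally show "x j = (\<Sum>v\<in>evec ` {1..r}. c v * v j)" by simp
  qed
  moreover have "\<forall>v\<in>evec ` {1..r}. c v \<ge> 0" using ce nn by auto
  ultimately have "x \<in> pos_cone (evec ` {1..r})" unfolding pos_cone_def by blast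
  with L show "x \<in> sigma0bar r" unfolding sigma0bar_def by blast
qed

lemma flp_char:
  assumes c: "c > 0"
    and P: "\<And>s. s > 0 \<Longrightarrow> ((\<lambda>j. s * w j) \<in> N - {\<lambda>_. 0} \<longleftrightarrow> P s)"
    and s0: "s0 > 0" "P s0" and mn: "\<And>s. s > 0 \<Longrightarrow> P s \<Longrightarrow> s0 \<le> s"
  shows "first_lattice_point N (\<lambda>j. c * w j) p \<longleftrightarrow> p = (\<lambda>j. s0 * w j)"
proof
  assume "first_lattice_point N (\<lambda>j. c * w j) p"
  then obtain t where t: "t > 0" "p = (\<lambda>j. t * (c * w j))" "p \<in> N - {\<lambda>_. 0}"
     and tm: "\<forall>s>0. (\<lambda>j. s * (c * w j)) \<in> N - {\<lambda>_. 0} \<longrightarrow> t \<le> s"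
    unfolding first_lattice_point_def by blast
  have e1: "p = (\<lambda>j. (t*c) * w j)" using t(2) by (simp add: mult.assoc)
  have "P (t*c)" using P[of "t*c"] t c e1 by simp
  hence "s0 \<le> t * c" using mn t c by simp
  moreover have "(\<lambda>j. (s0/c) * (c * w j)) = (\<lambda>j. s0 * w j)" using c by auto
  hence "t \<le> s0 / c" using tm s0 P[of s0] c by (metis divide_pos_pos)
  ultimately have "t * c = s0" using c by (simp add: field_simps)
  thus "p = (\<lambda>j. s0 * w j)" using e1 by simp
next
  assume p: "p = (\<lambda>j. s0 * w j)"
  have e: "(\<lambda>j. (s0/c) * (c * w j)) = (\<lambda>j. s0 * w j)" using c by auto
  have "\<forall>s>0. (\<lambda>j. s * (c * w j)) \<in> N - {\<lambda>_. 0} \<longrightarrow> s0/c \<le> s"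
  proof (intro allI impI)
    fix s :: real assume "s > 0" and h: "(\<lambda>j. s * (c * w j)) \<in> N - {\<lambda>_. 0}"
    have "(\<lambda>j. s * (c * w j)) = (\<lambda>j. (s*c) * w j)" by (simp add: mult.assoc)
    hence "P (s*c)" using P[of "s*c"] h \<open>s>0\<close> c by simp
    hence "s0 \<le> s * c" using mn \<open>s>0\<close> c by simp
    thus "s0/c \<le> s" using c by (simp add: field_simps)
  qed
  moreover have "p \<in> N - {\<lambda>_. 0}" using P[of s0] s0 p by simp
  ultimately show "first_lattice_point N (\<lambda>j. c * w j) p"
    unfolding first_lattice_point_def using e p c s0 by (metis divide_pos_pos)
qed


lemma res_sigma:
  assumes x: "x \<in> sigma0bar r" and B: "B \<inter> {1..r-2} = {} \<or> {1..r-2} \<subseteq> B"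
  shows "(\<lambda>j. if j \<in> B then x j else 0) \<in> sigma0bar r"
proof -
  have x1: "\<forall>j. j \<notin> {1..r} \<longrightarrow> x j = 0" and x2: "\<forall>i\<in>{1..r-2}. \<forall>j\<in>{1..r-2}. x i = x j"
    and x3: "\<forall>j. x j \<ge> 0"
    using x unfolding sigma_char Lsp_def by blast+
  let ?y = "(\<lambda>j. if j \<in> B then x j else 0)"
  have y1: "\<forall>j. j \<notin> {1..r} \<longrightarrow> ?y j = 0" using x1 by simp
  have y2: "\<forall>i\<in>{1..r-2}. \<forall>j\<in>{1..r-2}. ?y i = ?y j"
  proof (intro ballI)
    fix i j assume i: "i \<in> {1..r-2}" and j: "j \<in> {1..r-2}"
    from B show "?y i = ?y j"
    proof
      assume "B \<inter> {1..r-2} = {}"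
      hence "i \<notin> B" "j \<notin> B" using i j by blast+
      thus ?thesis by simp
    next
      assume "{1..r-2} \<subseteq> B"
      hence "i \<in> B" "j \<in> B" using i j by blast+
      moreover have "x i = x j" using x2 i j by blast
      ultimately show ?thesis by simp
    qed
  qed
  have y3: "\<forall>j. ?y j \<ge> 0" using x3 by simp
  show ?thesis unfolding sigma_char Lsp_def using y1 y2 y3 by blast
qed

lemma block:
  assumes v: "extremal_ray_gen (sigma0bar r) v"
    and B: "B \<inter> {1..r-2} = {} \<or> {1..r-2} \<subseteq> B"
    and j0: "j0 \<in> B" "v j0 \<noteq> 0"
  shows "\<forall>j. j \<notin> B \<longrightarrow> v j = 0"
proof -
  have vs: "v \<in> sigma0bar r" using v unfolding extremal_ray_gen_def by blast
  define a where "a = (\<lambda>j. if j \<in> B then v j else 0)"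
  define b where "b = (\<lambda>j. if j \<in> -B then v j else 0)"
  have as: "a \<in> sigma0bar r" unfolding a_def by (rule res_sigma[OF vs B])
  have B': "(-B) \<inter> {1..r-2} = {} \<or> {1..r-2} \<subseteq> -B" using B by blast
  have bs: "b \<in> sigma0bar r" unfolding b_def by (rule res_sigma[OF vs B'])
  have "(\<lambda>j. a j + b j) = (\<lambda>j. 1 * v j)" unfolding a_def b_def by auto
  hence "(\<lambda>j. a j + b j) \<in> ray v" unfolding ray_def by force
  hence "a \<in> ray v" using v as bs unfolding extremal_ray_gen_def by blast
  then obtain t where t: "a = (\<lambda>j. t * v j)" unfolding ray_def by blast
  have "v j0 = t * v j0" using fun_cong[OF t, of j0] j0 unfolding a_def by simp
  hence t1: "t = 1" using j0 by simp
  show ?thesis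
  proof (intro allI impI)
    fix j assume "j \<notin> B"
    thus "v j = 0" using fun_cong[OF t, of j] t1 unfolding a_def by simp
  qed
qed

lemma ext_nec:
  assumes r: "r \<ge> 4" and v: "extremal_ray_gen (sigma0bar r) v"
  shows "\<exists>c>0. v = (\<lambda>j. c * uvec (r-2) j) \<or> v = (\<lambda>j. c * evec (r-1) j) \<or> v = (\<lambda>j. c * evec r j)"
proof -
  have vs: "v \<in> sigma0bar r" and vne: "v \<noteq> (\<lambda>_. 0)" using v unfolding extremal_ray_gen_def by blast+
  have vL: "v \<in> Lsp r" and vnn: "\<forall>j. v j \<ge> 0" using vs by (simp_all add: sigma_char)
  have vout: "\<forall>j. j \<notin> {1..r} \<longrightarrow> v j = 0" and vc: "\<forall>i\<in>{1..r-2}. \<forall>j\<in>{1..r-2}. v i = v j"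
    using vL unfolding Lsp_def by blast+
  show ?thesis
  proof (cases "\<exists>j\<in>{1..r-2}. v j \<noteq> 0")
    case True
    then obtain j0 where j0: "j0 \<in> {1..r-2}" "v j0 \<noteq> 0" by blast
    have z: "\<forall>j. j \<notin> {1..r-2} \<longrightarrow> v j = 0" by (rule block[OF v _ j0]) simp
    have 1: "1 \<in> {1..r-2}" using r by auto
    have "v 1 = v j0" using vc j0 1 by blast
    hence c: "v 1 > 0" using vnn j0 by (metis order_le_less)
    have "v = (\<lambda>j. v 1 * uvec (r-2) j)"
    proof
      fix j show "v j = v 1 * uvec (r-2) j"
      proof (cases "j \<in> {1..r-2}")
        case True
        hence "v j = v 1" using vc 1 by blast
        thus ?thesis using True by (simp add: uvec_def)
      next
        case False
        hence u0: "uvec (r-2) j = 0" by (simp add: uvec_def)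
        have "v j = 0" using z False by blast
        thus ?thesis using u0 by simp
      qed
    qed
    thus ?thesis using c by blast
  next
    case False
    hence zM: "\<forall>j\<in>{1..r-2}. v j = 0" by blast
    show ?thesis
    proof (cases "v (r-1) = 0")
      case False
      have z: "\<forall>j. j \<notin> {r-1} \<longrightarrow> v j = 0" by (rule block[OF v _ _ False]) (use r in auto)
      have c: "v (r-1) > 0" using False vnn by (metis order_le_less)
      have "v = (\<lambda>j. v (r-1) * evec (r-1) j)"
      proof
        fix j show "v j = v (r-1) * evec (r-1) j" using z by (auto simp: evec_def)
      qed
      thus ?thesis using c by blast
    next
      case True
      have z: "v j = 0" if "j \<noteq> r" for j
      proof -
        have jr: "j \<noteq> r" by fact
        have "j \<in> {1..r-2} \<or> j = r - 1 \<or> j \<notin> {1..r}" using jr r by auto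
        thus ?thesis using zM True vout by auto
      qed
      have "v r \<noteq> 0"
      proof
        assume "v r = 0"
        hence "v j = 0" for j using z by (cases "j = r") auto
        hence "v = (\<lambda>_. 0)" by (intro ext)
        thus False using vne by simp
      qed
      hence c: "v r > 0" using vnn by (metis order_le_less)
      have "v = (\<lambda>j. v r * evec r j)"
      proof
        fix j show "v j = v r * evec r j" using z by (auto simp: evec_def)
      qed
      thus ?thesis using c by blast
    qed
  qed
qed

lemma ext_suff:
  assumes w: "w \<in> sigma0bar r" "w \<noteq> (\<lambda>_. 0)"
    and h: "\<And>x. x \<in> sigma0bar r \<Longrightarrow> (\<forall>j. w j = 0 \<longrightarrow> x j = 0) \<Longrightarrow> \<exists>s\<ge>0. x = (\<lambda>j. s * w j)"
  shows "extremal_ray_gen (sigma0bar r) w"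
  unfolding extremal_ray_gen_def
proof (intro conjI w ballI impI)
  fix a b assume a: "a \<in> sigma0bar r" and b: "b \<in> sigma0bar r" and ab: "(\<lambda>j. a j + b j) \<in> ray w"
  then obtain t where t: "(\<lambda>j. a j + b j) = (\<lambda>j. t * w j)" unfolding ray_def by blast
  have an: "\<forall>j. a j \<ge> 0" and bn: "\<forall>j. b j \<ge> 0" using a b unfolding sigma_char by auto
  have "\<forall>j. w j = 0 \<longrightarrow> a j = 0 \<and> b j = 0"
  proof (intro allI impI)
    fix j assume "w j = 0"
    hence "a j + b j = 0" using fun_cong[OF t, of j] by simp
    thus "a j = 0 \<and> b j = 0" using an bn by (smt (verit))
  qed
  hence "\<exists>s\<ge>0. a = (\<lambda>j. s * w j)" "\<exists>s\<ge>0. b = (\<lambda>j. s * w j)" using h a b by auto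
  thus "a \<in> ray w" "b \<in> ray w" unfolding ray_def by auto
qed

lemma ext_u: assumes r: "r \<ge> 4" shows "extremal_ray_gen (sigma0bar r) (uvec (r-2))"
proof (rule ext_suff)
  have "(\<lambda>j. 1 * uvec (r-2) j) \<in> Lsp r" by (rule Lsp_u)
  moreover have "\<forall>j. uvec (r-2) j \<ge> 0" by (simp add: uvec_def)
  ultimately show "uvec (r-2) \<in> sigma0bar r" unfolding sigma_char by simp
  have "uvec (r-2) 1 = 1" using r by (simp add: uvec_def)
  thus "uvec (r-2) \<noteq> (\<lambda>_. 0)" by auto
  fix x assume x: "x \<in> sigma0bar r" and z: "\<forall>j. uvec (r-2) j = 0 \<longrightarrow> x j = 0"
  have xL: "\<forall>i\<in>{1..r-2}. \<forall>j\<in>{1..r-2}. x i = x j"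
    using x unfolding sigma_char Lsp_def by blast
  have xn: "x 1 \<ge> 0" using x by (simp add: sigma_char)
  have 1: "1 \<in> {1..r-2}" using r by auto
  have "x = (\<lambda>j. x 1 * uvec (r-2) j)"
  proof
    fix j show "x j = x 1 * uvec (r-2) j"
    proof (cases "j \<in> {1..r-2}")
      case True
      hence "x j = x 1" using xL 1 by blast
      thus ?thesis using True by (simp add: uvec_def)
    next
      case False
      hence u0: "uvec (r-2) j = 0" by (simp add: uvec_def)
      have "x j = 0" using z False u0 by simp
      thus ?thesis using u0 by simp
    qed
  qed
  thus "\<exists>s\<ge>0. x = (\<lambda>j. s * uvec (r-2) j)" using xn by blast
qed

lemma ext_e: assumes r: "r \<ge> 4" and p: "p = r - 1 \<or> p = r" shows "extremal_ray_gen (sigma0bar r) (evec p)"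
proof (rule ext_suff)
  show "evec p \<in> sigma0bar r" using r p unfolding sigma_char Lsp_def evec_def by auto
  have "evec p p = 1" by (simp add: evec_def)
  thus "evec p \<noteq> (\<lambda>_. 0)" by auto
  fix x assume x: "x \<in> sigma0bar r" and z: "\<forall>j. evec p j = 0 \<longrightarrow> x j = 0"
  have xn: "x p \<ge> 0" using x unfolding sigma_char by auto
  have "x = (\<lambda>j. x p * evec p j)"
  proof
    fix j show "x j = x p * evec p j" using z by (auto simp: evec_def)
  qed
  thus "\<exists>s\<ge>0. x = (\<lambda>j. s * evec p j)" using xn by blast
qed

theorem lemma6p11:
  fixes r l \<alpha> \<beta> :: nat
  assumes "r \<ge> 4" and "l \<ge> r" and "\<alpha> + \<beta> = l - (r - 2)"
  defines "g \<equiv> gcd \<alpha> (gcd \<beta> l)"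
    and "d \<equiv> (\<lambda>j. (1 / real (r - 2)) * (\<Sum>i = 1..r - 2. evec i j))"
    and "nG \<equiv> (\<lambda>j. (1 / real (gcd \<alpha> (gcd \<beta> l))) * (\<Sum>i = 1..r - 2. evec i j))"
  shows "first_lattice_point (NGbar r l \<alpha> \<beta>) d nG
     \<and> primitive_generators (NGbar r l \<alpha> \<beta>) (sigma0bar r) = {nG, evec (r - 1), evec r}
     \<and> (real (r - 2) / real g \<in> {\<kappa>. \<kappa> \<in> \<rat> \<and> \<kappa> > 0 \<and> (\<lambda>j. \<kappa> * d j) \<in> NGbar r l \<alpha> \<beta> - {\<lambda>_. 0}}
        \<and> (\<forall>\<kappa>. \<kappa> \<in> \<rat> \<and> \<kappa> > 0 \<and> (\<lambda>j. \<kappa> * d j) \<in> NGbar r l \<alpha> \<beta> - {\<lambda>_. 0}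
              \<longrightarrow> real (r - 2) / real g \<le> \<kappa>))"
proof -
  define u where "u = uvec (r-2)"
  have r4: "r \<ge> 4" by fact
  have gpos: "real g > 0" using assms(1,2) unfolding g_def by simp
  have mpos: "real (r-2) > 0" using r4 by simp
  have d_eq: "d = (\<lambda>j. (1/real(r-2)) * u j)" unfolding d_def u_def sum_evec by simp
  have nG_eq: "nG = (\<lambda>j. (1/real g) * u j)" unfolding nG_def u_def g_def sum_evec by simp
  have U: "(\<lambda>j. s * u j) \<in> NGbar r l \<alpha> \<beta> - {\<lambda>_. 0} \<longleftrightarrow> (\<exists>n::int. s = of_int n / real g)"
    if "s > 0" for s
  proof -
    have "(\<lambda>j. s * u j) \<noteq> (\<lambda>_. 0)"
    proof
      assume "(\<lambda>j. s * u j) = (\<lambda>_. 0)"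
      have "Suc 0 \<le> r - 2" using r4 by simp
      with fun_cong[OF \<open>(\<lambda>j. s * u j) = (\<lambda>_. 0)\<close>, of 1] have "s = 0" by (simp add: u_def uvec_def)
      thus False using that by simp
    qed
    moreover have "(\<lambda>j. s * u j) \<in> NGbar r l \<alpha> \<beta> \<longleftrightarrow> (\<lambda>j. s * uvec (r-2) j) \<in> NG r l \<alpha> \<beta>"
      using Lsp_u[of s r] unfolding NGbar_def u_def by blast
    ultimately show ?thesis unfolding g_def using NG_u[OF assms(1,2), of s \<alpha> \<beta>] by blast
  qed
  have Umin: "1 / real g \<le> s" if sp: "s > 0" and sn: "\<exists>n::int. s = of_int n / real g" for s
  proof -
    obtain n::int where n: "s = of_int n / real g" using sn by blast
    have "of_int n > (0::real)" using n sp gpos by (simp add: zero_less_divide_iff)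
    hence "n \<ge> 1" by simp
    hence "of_int n \<ge> (1::real)" by simp
    thus ?thesis using n gpos by (simp add: divide_right_mono)
  qed
  have ginv: "0 < 1 / real g" using gpos by simp
  have U1: "\<exists>n::int. 1 / real g = of_int n / real g" by (rule exI[of _ 1]) simp
  have E: "(\<lambda>j. s * evec p j) \<in> NGbar r l \<alpha> \<beta> - {\<lambda>_. 0} \<longleftrightarrow> (\<exists>n::int. s = of_int n)"
    if "s > 0" "p = r - 1 \<or> p = r" for s p
  proof -
    have "(\<lambda>j. s * evec p j) \<noteq> (\<lambda>_. 0)"
    proof
      assume "(\<lambda>j. s * evec p j) = (\<lambda>_. 0)"
      from fun_cong[OF this, of p] have "s = 0" by (simp add: evec_def)
      thus False using that by simp
    qed
    moreover have "(\<lambda>j. s * evec p j) \<in> NGbar r l \<alpha> \<beta> \<longleftrightarrow> (\<lambda>j. s * evec p j) \<in> NG r l \<alpha> \<beta>"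
      using Lsp_e[OF r4 that(2), of s] unfolding NGbar_def by blast
    ultimately show ?thesis using NG_e[OF assms(1,2) that(2), of s \<alpha> \<beta>] by blast
  qed
  have Emin: "1 \<le> s" if sp: "s > 0" and sn: "\<exists>n::int. s = of_int n" for s :: real
  proof -
    obtain n::int where n: "s = of_int n" using sn by blast
    hence "n > 0" using sp by simp
    hence "n \<ge> 1" by simp
    thus ?thesis using n by simp
  qed
  have E1: "\<exists>n::int. (1::real) = of_int n" by (rule exI[of _ 1]) simp
  have flpU: "first_lattice_point (NGbar r l \<alpha> \<beta>) (\<lambda>j. c * u j) p \<longleftrightarrow> p = nG" if "c > 0" for c p
    unfolding nG_eq
    by (rule flp_char[where P="\<lambda>s. \<exists>n::int. s = of_int n / real g", OF that U ginv U1 Umin])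
  have flpE: "first_lattice_point (NGbar r l \<alpha> \<beta>) (\<lambda>j. c * evec q j) p \<longleftrightarrow> p = evec q"
    if "c > 0" "q = r - 1 \<or> q = r" for c p q
  proof -
    have "first_lattice_point (NGbar r l \<alpha> \<beta>) (\<lambda>j. c * evec q j) p \<longleftrightarrow> p = (\<lambda>j. 1 * evec q j)"
      by (rule flp_char[where P="\<lambda>s. \<exists>n::int. s = of_int n", OF that(1) E[OF _ that(2)] zero_less_one E1 Emin])
    thus ?thesis by simp
  qed
  have C1: "first_lattice_point (NGbar r l \<alpha> \<beta>) d nG"
    unfolding d_eq using flpU[of "1/real(r-2)" nG] mpos by simp
  have C2: "primitive_generators (NGbar r l \<alpha> \<beta>) (sigma0bar r) = {nG, evec (r - 1), evec r}"
  proof (intro set_eqI iffI)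
    fix p assume "p \<in> primitive_generators (NGbar r l \<alpha> \<beta>) (sigma0bar r)"
    then obtain v where v: "extremal_ray_gen (sigma0bar r) v" "first_lattice_point (NGbar r l \<alpha> \<beta>) v p"
      unfolding primitive_generators_def by blast
    from ext_nec[OF r4 v(1)] obtain c where c: "c > 0"
      "v = (\<lambda>j. c * u j) \<or> v = (\<lambda>j. c * evec (r-1) j) \<or> v = (\<lambda>j. c * evec r j)"
      unfolding u_def by blast
    from c(2) show "p \<in> {nG, evec (r - 1), evec r}"
    proof (elim disjE)
      assume "v = (\<lambda>j. c * u j)" thus ?thesis using v(2) flpU[OF c(1)] by simp
    next
      assume "v = (\<lambda>j. c * evec (r-1) j)" thus ?thesis using v(2) flpE[OF c(1)] by simp
    next
      assume "v = (\<lambda>j. c * evec r j)" thus ?thesis using v(2) flpE[OF c(1)] by simp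
    qed
  next
    fix p assume "p \<in> {nG, evec (r - 1), evec r}"
    hence "p = nG \<or> p = evec (r-1) \<or> p = evec r" by simp
    thus "p \<in> primitive_generators (NGbar r l \<alpha> \<beta>) (sigma0bar r)"
    proof (elim disjE)
      assume p: "p = nG"
      have "u = (\<lambda>j. 1 * u j)" by simp
      hence "first_lattice_point (NGbar r l \<alpha> \<beta>) u p" using flpU[of 1 p] p by simp
      moreover have "extremal_ray_gen (sigma0bar r) u" unfolding u_def by (rule ext_u[OF r4])
      ultimately show ?thesis unfolding primitive_generators_def by blast
    next
      assume p: "p = evec (r-1)"
      have "first_lattice_point (NGbar r l \<alpha> \<beta>) (evec (r-1)) p" using flpE[of 1 "r-1" p] p by simp
      moreover have "extremal_ray_gen (sigma0bar r) (evec (r-1))" by (rule ext_e[OF r4]) simp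
      ultimately show ?thesis unfolding primitive_generators_def by blast
    next
      assume p: "p = evec r"
      have "first_lattice_point (NGbar r l \<alpha> \<beta>) (evec r) p" using flpE[of 1 "r" p] p by simp
      moreover have "extremal_ray_gen (sigma0bar r) (evec r)" by (rule ext_e[OF r4]) simp
      ultimately show ?thesis unfolding primitive_generators_def by blast
    qed
  qed
  have kd: "(\<lambda>j. \<kappa> * d j) = (\<lambda>j. (\<kappa> / real (r-2)) * u j)" for \<kappa>
    unfolding d_eq by auto
  have C3a: "real (r - 2) / real g \<in> {\<kappa>. \<kappa> \<in> \<rat> \<and> \<kappa> > 0 \<and> (\<lambda>j. \<kappa> * d j) \<in> NGbar r l \<alpha> \<beta> - {\<lambda>_. 0}}"
  proof -
    have "real (r - 2) / real g / real (r-2) = 1 / real g" using mpos by simp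
    hence "(\<lambda>j. (real (r - 2) / real g) * d j) \<in> NGbar r l \<alpha> \<beta> - {\<lambda>_. 0}"
      unfolding kd using U[of "1 / real g"] U1 gpos by simp
    moreover have "real (r - 2) / real g \<in> \<rat>" by (intro Rats_divide Rats_of_nat)
    moreover have "real (r - 2) / real g > 0" using mpos gpos by simp
    ultimately show ?thesis by blast
  qed
  have C3b: "\<forall>\<kappa>. \<kappa> \<in> \<rat> \<and> \<kappa> > 0 \<and> (\<lambda>j. \<kappa> * d j) \<in> NGbar r l \<alpha> \<beta> - {\<lambda>_. 0}
              \<longrightarrow> real (r - 2) / real g \<le> \<kappa>"
  proof (intro allI impI)
    fix \<kappa> :: real assume h: "\<kappa> \<in> \<rat> \<and> \<kappa> > 0 \<and> (\<lambda>j. \<kappa> * d j) \<in> NGbar r l \<alpha> \<beta> - {\<lambda>_. 0}"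
    have kp: "\<kappa> / real (r-2) > 0" using h mpos by simp
    hence "\<exists>n::int. \<kappa> / real (r-2) = of_int n / real g" using U[OF kp] h unfolding kd by simp
    hence "1 / real g \<le> \<kappa> / real (r-2)" using Umin kp by blast
    thus "real (r - 2) / real g \<le> \<kappa>" using mpos gpos by (simp add: field_simps)
  qed
  show ?thesis using C1 C2 C3a C3b by blast
qed

end
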